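(* Let $f\colon M^n\to\mathbb{S}^{n+m}$ be an isometric immersion, $x\in M^n$, and $k$ an integer with $2\leq k\leq n/2$, and assume that $\mathrm{Ric}_M(X)\geq b(n,k,H(x))$ for every unit $X\in T_xM$, where $b(n,k,H)=\frac{n(k-1)}{k}+\frac{n(k-1)H}{2k^2}\big(nH+\sqrt{n^2H^2+4k(n-k)}\big)$. Let $$\lambda(n,k,H)=\frac{1}{2k}\big(nH+\sqrt{n^2H^2+4k(n-k)}\big),\qquad \mu(n,k,H)=\frac{1}{2k}\big(n(2k-1)H-\sqrt{n^2H^2+4k(n-k)}\big).$$ Then: (i) If $H(x)\neq 0$, the shape operator $A_1$ of $f$ at $x$ in the direction $\xi_1=\mathcal H(x)/H(x)$ satisfies $\mu(n,k,H(x))\leq\langle A_1X,X\rangle\leq\lambda(n,k,H(x))$ for every unit $X\in T_xM$. (ii) If $H(x)=0$, then for every unit normal vector $\xi\in N_fM(x)$ the shape operator $A_\xi$ satisfies $\mu(n,k,0)\leq\langle A_\xi X,X\rangle\leq\lambda(n,k,0)$ for every unit $X\in T_xM$.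
   Context: $\mathbb{S}^{n+m}$ is the unit sphere; $\mathcal H=\frac1n\mathrm{tr}\,\alpha_f$ is the normalized mean curvature vector of $f$ ($\alpha_f$ its second fundamental form), $H=\|\mathcal H\|$, $A_\xi$ the shape operator in the normal direction $\xi$, and $\mathrm{Ric}_M(X)$ the non-normalized Ricci curvature in the unit direction $X$. *)

theory Defs
  imports "HOL-Analysis.Analysis"
begin

text \<open>Pointwise model of an isometric immersion f: M^n -> S^(n+m) at a point x.
  The tangent space T_xM is identified isometrically with real^'n (n = CARD('n)),
  the normal space N_fM(x) with real^'m; the standard basis vectors axis i 1 form
  an orthonormal basis of T_xM.  The second fundamental form at x is a symmetric
  bilinear map alpha :: real^'n => real^'n => real^'m.\<close>

definition mean_curv_vec :: "(real^'n \<Rightarrow> real^'n \<Rightarrow> real^'m) \<Rightarrow> real^'m" where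
  "mean_curv_vec \<alpha> = (1 / real CARD('n)) *\<^sub>R (\<Sum>i\<in>UNIV. \<alpha> (axis i 1) (axis i 1))"

text \<open>Shape operator A_xi, determined by <A_xi X, Y> = <alpha(X,Y), xi>.\<close>
definition shape_op :: "(real^'n \<Rightarrow> real^'n \<Rightarrow> real^'m) \<Rightarrow> real^'m \<Rightarrow> real^'n \<Rightarrow> real^'n" where
  "shape_op \<alpha> \<xi> X = (\<chi> i. \<alpha> X (axis i 1) \<bullet> \<xi>)"

text \<open>Sectional curvature of M at x, by the Gauss equation for submanifolds of the unit sphere:
  K(X,Y) = 1 + <alpha(X,X),alpha(Y,Y)> - |alpha(X,Y)|^2 for orthonormal X, Y.
  The (non-normalized) Ricci curvature in the unit direction X is
  Ric(X) = sum_i <R(X,e_i)e_i, X>, which by the Gauss equation equals the following.\<close>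
definition ricci :: "(real^'n \<Rightarrow> real^'n \<Rightarrow> real^'m) \<Rightarrow> real^'n \<Rightarrow> real" where
  "ricci \<alpha> X = (\<Sum>i\<in>UNIV. (X \<bullet> X) * (axis i (1::real) \<bullet> axis i (1::real)) - (X \<bullet> axis i 1)^2
        + \<alpha> X X \<bullet> \<alpha> (axis i 1) (axis i 1) - \<alpha> X (axis i 1) \<bullet> \<alpha> X (axis i 1))"

definition bnd :: "real \<Rightarrow> real \<Rightarrow> real \<Rightarrow> real" where
  "bnd n k H = n * (k - 1) / k + n * (k - 1) * H / (2 * k^2) * (n * H + sqrt (n^2 * H^2 + 4 * k * (n - k)))"

definition lam :: "real \<Rightarrow> real \<Rightarrow> real \<Rightarrow> real" where
  "lam n k H = (1 / (2 * k)) * (n * H + sqrt (n^2 * H^2 + 4 * k * (n - k)))"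

definition mu :: "real \<Rightarrow> real \<Rightarrow> real \<Rightarrow> real" where
  "mu n k H = (1 / (2 * k)) * (n * (2 * k - 1) * H - sqrt (n^2 * H^2 + 4 * k * (n - k)))"

end

theory Submission
  imports Defs
begin

lemma expand_vec: "(\<Sum>i\<in>UNIV. (x$i) *\<^sub>R axis i (1::real)) = (x::real^'n)"
  using basis_expansion[of x] by (simp add: scalar_mult_eq_scaleR)

lemma quad_bound:
  fixes \<alpha> :: "real^'n \<Rightarrow> real^'n \<Rightarrow> real^'m"
  assumes bil: "bilinear \<alpha>" and X: "norm X = 1" and xi: "norm \<xi> = 1"
  shows "(\<alpha> X X \<bullet> \<xi>)^2 \<le> (\<Sum>i\<in>UNIV. \<alpha> X (axis i 1) \<bullet> \<alpha> X (axis i 1))"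
proof -
  define V :: "real^'n" where "V = (\<chi> i. \<alpha> X (axis i 1) \<bullet> \<xi>)"
  have lin: "linear (\<alpha> X)" using bil unfolding bilinear_def by auto
  have "\<alpha> X X = \<alpha> X (\<Sum>i\<in>UNIV. (X$i) *\<^sub>R axis i (1::real))" by (simp add: expand_vec)
  also have "\<dots> = (\<Sum>i\<in>UNIV. (X$i) *\<^sub>R \<alpha> X (axis i 1))"
    by (simp add: linear_sum[OF lin] linear_scale[OF lin])
  finally have "\<alpha> X X \<bullet> \<xi> = (\<Sum>i\<in>UNIV. X$i * (\<alpha> X (axis i 1) \<bullet> \<xi>))"
    by (simp add: inner_sum_left)
  also have "\<dots> = X \<bullet> V" by (simp add: V_def inner_vec_def)
  finally have e: "\<alpha> X X \<bullet> \<xi> = X \<bullet> V" .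
  have "\<bar>X \<bullet> V\<bar> \<le> norm X * norm V" by (rule Cauchy_Schwarz_ineq2)
  then have "\<bar>X \<bullet> V\<bar>^2 \<le> (norm X * norm V)^2" by (rule power_mono) simp
  then have "(X \<bullet> V)^2 \<le> (norm X * norm V)^2" by simp
  also have "\<dots> = V \<bullet> V" using X by (simp add: power2_norm_eq_inner)
  also have "\<dots> = (\<Sum>i\<in>UNIV. (\<alpha> X (axis i 1) \<bullet> \<xi>)^2)" by (simp add: V_def inner_vec_def power2_eq_square)
  also have "\<dots> \<le> (\<Sum>i\<in>UNIV. \<alpha> X (axis i 1) \<bullet> \<alpha> X (axis i 1))"
  proof (rule sum_mono)
    fix i
    have "\<bar>\<alpha> X (axis i 1) \<bullet> \<xi>\<bar> \<le> norm (\<alpha> X (axis i 1)) * norm \<xi>" by (rule Cauchy_Schwarz_ineq2)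
    then have "\<bar>\<alpha> X (axis i 1) \<bullet> \<xi>\<bar>^2 \<le> (norm (\<alpha> X (axis i 1)) * norm \<xi>)^2" by (rule power_mono) simp
    then have "(\<alpha> X (axis i 1) \<bullet> \<xi>)^2 \<le> (norm (\<alpha> X (axis i 1)) * norm \<xi>)^2" by simp
    then show "(\<alpha> X (axis i 1) \<bullet> \<xi>)^2 \<le> \<alpha> X (axis i 1) \<bullet> \<alpha> X (axis i 1)"
      using xi by (simp add: power2_norm_eq_inner)
  qed
  finally show ?thesis using e by simp
qed

lemma ricci_eq:
  fixes \<alpha> :: "real^'n \<Rightarrow> real^'n \<Rightarrow> real^'m"
  assumes X: "norm X = 1"
  shows "ricci \<alpha> X = real CARD('n) - 1 + real CARD('n) * (\<alpha> X X \<bullet> mean_curv_vec \<alpha>)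
     - (\<Sum>i\<in>UNIV. \<alpha> X (axis i 1) \<bullet> \<alpha> X (axis i 1))"
proof -
  have XX: "X \<bullet> X = 1" using X by (simp add: power2_norm_eq_inner[symmetric])
  have ax: "\<And>i. X \<bullet> axis i 1 = X$i" by (simp add: inner_axis)
  have s: "(\<Sum>i\<in>UNIV. (X \<bullet> axis i 1)^2) = 1"
    unfolding ax using XX by (simp add: inner_vec_def power2_eq_square)
  have m: "real CARD('n) * (\<alpha> X X \<bullet> mean_curv_vec \<alpha>) = (\<Sum>i\<in>UNIV. \<alpha> X X \<bullet> \<alpha> (axis i 1) (axis i 1))"
    by (simp add: mean_curv_vec_def inner_sum_right)
  show ?thesis unfolding ricci_def using XX s m
    by (simp add: sum.distrib sum_subtractf inner_axis_axis)
qed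

lemma alg:
  fixes n k H S a b :: real
  assumes S: "S = sqrt (n^2 * H^2 + 4 * k * (n - k))" and kn: "k \<le> n" and k0: "0 < k"
    and b: "b = bnd n k H" and ineq: "b \<le> n - 1 + n * H * a - a^2"
  shows "(a - lam n k H) * (a - mu n k H) \<le> 0"
proof -
  have SS: "S^2 = n^2 * H^2 + 4 * k * (n - k)" using S kn k0
    by (simp add: mult_nonneg_nonneg)
  define l where "l = lam n k H"
  define m where "m = mu n k H"
  have l: "2*k*l = n*H + S" using k0 by (simp add: l_def lam_def S)
  have m: "2*k*m = n*(2*k-1)*H - S" using k0 by (simp add: m_def mu_def S)
  have bb: "4*k^2*(b-n+1) = 4*k*(k-n) + 2*n*(k-1)*H*(n*H+S)"
    using k0 by (simp add: b bnd_def S field_simps power2_eq_square)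
  have sum: "l + m = n*H"
  proof -
    have "2*k*(l+m) = 2*k*(n*H)" using l m by (simp add: algebra_simps)
    then show ?thesis using k0 by simp
  qed
  have "(2*k*l)*(2*k*m) = (n*H + S)*(n*(2*k-1)*H - S)" using l m by simp
  also have "\<dots> = n^2*(2*k-1)*H^2 + n*(2*k-2)*H*S - S^2" by (simp add: algebra_simps power2_eq_square)
  also have "\<dots> = 4*k^2*(b-n+1)" unfolding bb SS by (simp add: algebra_simps power2_eq_square)
  finally have "4*k^2*(l*m) = 4*k^2*(b-n+1)" by (simp add: algebra_simps power2_eq_square)
  then have prod: "l*m = b-n+1" using k0 by simp
  have "(a - l) * (a - m) = a^2 - (l+m)*a + l*m" by (simp add: algebra_simps power2_eq_square)
  also have "\<dots> = a^2 - n*H*a + (b-n+1)" using sum prod by simp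
  finally show ?thesis using ineq unfolding l_def m_def by simp
qed

lemma shape_eq:
  fixes \<alpha> :: "real^'n \<Rightarrow> real^'n \<Rightarrow> real^'m"
  assumes bil: "bilinear \<alpha>"
  shows "shape_op \<alpha> \<xi> X \<bullet> X = \<alpha> X X \<bullet> \<xi>"
proof -
  have lin: "linear (\<alpha> X)" using bil unfolding bilinear_def by auto
  have "\<alpha> X X = \<alpha> X (\<Sum>i\<in>UNIV. (X$i) *\<^sub>R axis i (1::real))" by (simp add: expand_vec)
  also have "\<dots> = (\<Sum>i\<in>UNIV. (X$i) *\<^sub>R \<alpha> X (axis i 1))"
    by (simp add: linear_sum[OF lin] linear_scale[OF lin])
  finally have "\<alpha> X X \<bullet> \<xi> = (\<Sum>i\<in>UNIV. X$i * (\<alpha> X (axis i 1) \<bullet> \<xi>))"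
    by (simp add: inner_sum_left)
  also have "\<dots> = shape_op \<alpha> \<xi> X \<bullet> X" by (simp add: shape_op_def inner_vec_def mult.commute)
  finally show ?thesis by simp
qed

lemma between:
  fixes a l m :: real
  assumes "(a - l) * (a - m) \<le> 0" "m \<le> l"
  shows "m \<le> a \<and> a \<le> l"
proof (rule ccontr)
  assume "\<not> (m \<le> a \<and> a \<le> l)"
  then have "a < m \<or> a > l" by auto
  then have "(a - l) * (a - m) > 0"
  proof
    assume "a < m" then have "a - l < 0" "a - m < 0" using assms(2) by auto
    then show ?thesis by (simp add: mult_neg_neg)
  next
    assume "a > l" then have "a - l > 0" "a - m > 0" using assms(2) by auto
    then show ?thesis by simp
  qed
  then show False using assms(1) by simp
qed

lemma between2:
  fixes a l m :: real
  assumes "(a - l) * (a - m) \<le> 0" "l < m"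
  shows "l \<le> a"
proof (rule ccontr)
  assume "\<not> l \<le> a"
  then have "a - l < 0" "a - m < 0" using assms(2) by auto
  then have "(a - l) * (a - m) > 0" by (simp add: mult_neg_neg)
  then show False using assms(1) by simp
qed

theorem lemma6:
  fixes \<alpha> :: "real^'n \<Rightarrow> real^'n \<Rightarrow> real^'m" and k :: nat
  assumes bil: "bilinear \<alpha>"
    and sym: "\<And>X Y. \<alpha> X Y = \<alpha> Y X"
    and k2: "2 \<le> k" and kn: "2 * k \<le> CARD('n)"
    and ric: "\<And>X. norm X = 1 \<Longrightarrow>
               ricci \<alpha> X \<ge> bnd (real CARD('n)) (real k) (norm (mean_curv_vec \<alpha>))"
  shows "(norm (mean_curv_vec \<alpha>) \<noteq> 0 \<longrightarrow>
            (\<forall>X. norm X = 1 \<longrightarrow>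
               (let H = norm (mean_curv_vec \<alpha>);
                    \<xi>1 = (1 / H) *\<^sub>R mean_curv_vec \<alpha>
                in mu (real CARD('n)) (real k) H \<le> shape_op \<alpha> \<xi>1 X \<bullet> X
                 \<and> shape_op \<alpha> \<xi>1 X \<bullet> X \<le> lam (real CARD('n)) (real k) H)))
       \<and> (norm (mean_curv_vec \<alpha>) = 0 \<longrightarrow>
            (\<forall>\<xi> X. norm \<xi> = 1 \<longrightarrow> norm X = 1 \<longrightarrow>
               mu (real CARD('n)) (real k) 0 \<le> shape_op \<alpha> \<xi> X \<bullet> X
             \<and> shape_op \<alpha> \<xi> X \<bullet> X \<le> lam (real CARD('n)) (real k) 0))"
proof -
  define n where "n = real CARD('n)"
  define H where "H = norm (mean_curv_vec \<alpha>)"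
  define S where "S = sqrt (n^2 * H^2 + 4 * real k * (n - real k))"
  have n0: "n > 0" by (simp add: n_def)
  have kn': "2 * real k \<le> n" using kn unfolding n_def by (metis of_nat_le_iff of_nat_mult of_nat_numeral)
  have k0: "real k > 0" using k2 by simp
  have H0: "H \<ge> 0" by (simp add: H_def)
  have G: "(\<alpha> X X \<bullet> \<xi> - lam n (real k) (H * c)) * (\<alpha> X X \<bullet> \<xi> - mu n (real k) (H * c)) \<le> 0"
    if X: "norm X = 1" and xi: "norm \<xi> = 1" and hc: "\<alpha> X X \<bullet> mean_curv_vec \<alpha> = (H*c) * (\<alpha> X X \<bullet> \<xi>)"
      and c: "H * c = H" for X \<xi> c
  proof -
    have q: "(\<alpha> X X \<bullet> \<xi>)^2 \<le> (\<Sum>i\<in>UNIV. \<alpha> X (axis i 1) \<bullet> \<alpha> X (axis i 1))"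
      by (rule quad_bound[OF bil X xi])
    have "bnd n (real k) H \<le> ricci \<alpha> X" using ric[OF X] by (simp add: n_def H_def)
    also have "\<dots> \<le> n - 1 + n * ((H*c) * (\<alpha> X X \<bullet> \<xi>)) - (\<alpha> X X \<bullet> \<xi>)^2"
      using ricci_eq[OF X, of \<alpha>, unfolded hc, folded n_def] q by linarith
    finally have fin: "bnd n (real k) H \<le> n - 1 + n * H * (\<alpha> X X \<bullet> \<xi>) - (\<alpha> X X \<bullet> \<xi>)^2"
      unfolding c by (simp only: mult.assoc)
    have kle: "real k \<le> n" using kn' k0 by linarith
    show ?thesis unfolding c
      by (rule alg[OF refl kle k0 refl fin])
  qed
  have P1: "\<forall>X. norm X = 1 \<longrightarrow>
               (let H = norm (mean_curv_vec \<alpha>);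
                    \<xi>1 = (1 / H) *\<^sub>R mean_curv_vec \<alpha>
                in mu (real CARD('n)) (real k) H \<le> shape_op \<alpha> \<xi>1 X \<bullet> X
                 \<and> shape_op \<alpha> \<xi>1 X \<bullet> X \<le> lam (real CARD('n)) (real k) H)"
    if Hn: "norm (mean_curv_vec \<alpha>) \<noteq> 0"
  proof (intro allI impI)
    fix X :: "real^'n"
    assume X1: "norm X = 1"
    have Hp: "H > 0" using Hn by (simp add: H_def)
    define \<xi>1 where "\<xi>1 = (1 / H) *\<^sub>R mean_curv_vec \<alpha>"
    have nxi: "norm \<xi>1 = 1" using Hp by (simp add: \<xi>1_def H_def)
    have hc: "\<alpha> X X \<bullet> mean_curv_vec \<alpha> = (H*1) * (\<alpha> X X \<bullet> \<xi>1)" for X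
      using Hp unfolding \<xi>1_def inner_scaleR_right by simp
    have G1: "(\<alpha> X X \<bullet> \<xi>1 - lam n (real k) H) * (\<alpha> X X \<bullet> \<xi>1 - mu n (real k) H) \<le> 0"
      if "norm X = 1" for X using G[OF that nxi hc] by simp
    have ml: "mu n (real k) H \<le> lam n (real k) H"
    proof (rule ccontr)
      assume "\<not> ?thesis"
      then have lm: "lam n (real k) H < mu n (real k) H" by simp
      have Spos: "S > 0" unfolding S_def
        using kn' k0 by (intro real_sqrt_gt_zero add_nonneg_pos) (auto intro!: mult_pos_pos)
      have "H * (2 * real k) \<le> H * n" by (rule mult_left_mono[OF kn' H0])
      then have "H \<le> n * H / (2 * real k)" using k0
        by (simp add: field_simps)
      also have "\<dots> < lam n (real k) H" using Spos k0 unfolding lam_def S_def[symmetric]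
        by (simp add: field_simps)
      finally have lH: "H < lam n (real k) H" .
      have "(\<Sum>i\<in>(UNIV::'n set). H) < (\<Sum>i\<in>UNIV. \<alpha> (axis i 1) (axis i 1) \<bullet> \<xi>1)"
      proof (rule sum_strict_mono)
        fix i :: 'n
        have "lam n (real k) H \<le> \<alpha> (axis i 1) (axis i 1) \<bullet> \<xi>1"
          by (rule between2[OF G1 lm]) simp
        then show "H < \<alpha> (axis i 1) (axis i 1) \<bullet> \<xi>1" using lH by simp
      qed auto
      also have "\<dots> = (\<Sum>i\<in>UNIV. \<alpha> (axis i 1) (axis i 1)) \<bullet> \<xi>1" by (simp add: inner_sum_left)
      also have "(\<Sum>i\<in>UNIV. \<alpha> (axis i 1) (axis i 1)) = n *\<^sub>R mean_curv_vec \<alpha>"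
        using n0 by (simp add: mean_curv_vec_def n_def)
      also have "(n *\<^sub>R mean_curv_vec \<alpha>) \<bullet> \<xi>1 = n * (1/H) * (mean_curv_vec \<alpha> \<bullet> mean_curv_vec \<alpha>)"
        unfolding \<xi>1_def inner_scaleR_left inner_scaleR_right by simp
      also have "mean_curv_vec \<alpha> \<bullet> mean_curv_vec \<alpha> = H * H"
        unfolding H_def by (simp add: dot_square_norm power2_eq_square)
      also have "n * (1/H) * (H * H) = n * H" using Hp by simp
      finally show False by (simp add: n_def)
    qed
    show "let H = norm (mean_curv_vec \<alpha>);
                    \<xi>1 = (1 / H) *\<^sub>R mean_curv_vec \<alpha>
                in mu (real CARD('n)) (real k) H \<le> shape_op \<alpha> \<xi>1 X \<bullet> X
                 \<and> shape_op \<alpha> \<xi>1 X \<bullet> X \<le> lam (real CARD('n)) (real k) H"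
      using between[OF G1[OF X1] ml] unfolding Let_def shape_eq[OF bil]
      by (simp only: \<xi>1_def H_def n_def)
  qed
  have P2: "\<forall>\<xi> X. norm \<xi> = 1 \<longrightarrow> norm X = 1 \<longrightarrow>
               mu (real CARD('n)) (real k) 0 \<le> shape_op \<alpha> \<xi> X \<bullet> X
             \<and> shape_op \<alpha> \<xi> X \<bullet> X \<le> lam (real CARD('n)) (real k) 0"
    if H0': "norm (mean_curv_vec \<alpha>) = 0"
  proof (intro allI impI)
    fix \<xi> :: "real^'m" and X :: "real^'n"
    assume xi: "norm \<xi> = 1" and X: "norm X = 1"
    have Hz: "H = 0" using H0' by (simp add: H_def)
      have "mean_curv_vec \<alpha> = 0" using H0' by simp
      then have hc: "\<alpha> X X \<bullet> mean_curv_vec \<alpha> = (H*0) * (\<alpha> X X \<bullet> \<xi>)" by simp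
      have g: "(\<alpha> X X \<bullet> \<xi> - lam n (real k) 0) * (\<alpha> X X \<bullet> \<xi> - mu n (real k) 0) \<le> 0"
        using G[OF X xi hc] Hz by (simp only: mult_zero_right)
      have "0 \<le> real k * (n - real k)" using k0 kn' by simp
      then have ml: "mu n (real k) 0 \<le> lam n (real k) 0" using k0
        unfolding mu_def lam_def by (simp add: divide_simps)
      show "mu (real CARD('n)) (real k) 0 \<le> shape_op \<alpha> \<xi> X \<bullet> X
             \<and> shape_op \<alpha> \<xi> X \<bullet> X \<le> lam (real CARD('n)) (real k) 0"
        using between[OF g ml] unfolding shape_eq[OF bil] n_def by simp
  qed
  show ?thesis
    apply (rule conjI)
     apply (rule impI, rule P1, assumption)
    apply (rule impI, rule P2, assumption)
    done
qed

end
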